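(* Let $V$ be a reflexive Banach space, $F: V\to\mathbb{R}$ Fréchet differentiable and convex, $G\in\Gamma_0(V)$. For $1\le k\le N$ let $V_k$ be reflexive Banach spaces and $R_k^*: V_k\to V$ bounded linear operators with $V=\sum_{k=1}^N R_k^*V_k$ and surjective adjoints $R_k: V^*\to V_k^*$, and let $d_k, G_k: V_k\times V\to\overline{\mathbb{R}}$ be proper, convex and lower semicontinuous in their first argument. Let $\tau_0\in(0,1]$ and $\omega_0>0$ be given constants, $\tau\in(0,\tau_0]$, $\omega\ge\omega_0$, and $u^{(0)}\in\operatorname{dom}G$. Let $\{u^{(n)}\}$ be generated by the additive Schwarz method: for $n\ge0$, $$w_k^{(n+1)} \in \operatorname{argmin}_{w_k\in V_k}\big\{F(u^{(n)}) + \langle F'(u^{(n)}), R_k^* w_k\rangle + \omega d_k(w_k,u^{(n)}) + G_k(w_k,u^{(n)})\big\},\ 1\le k\le N,$$ $$u^{(n+1)} = u^{(n)} + \tau\sum_{k=1}^N R_k^* w_k^{(n+1)}.$$ Then for all $n\ge0$, $$u^{(n+1)} \in \operatorname{argmin}_{u\in V}\big\{F(u^{(n)}) + \langle F'(u^{(n)}), u-u^{(n)}\rangle + M_{\tau,\omega}(u,u^{(n)})\big\},$$ where $M_{\tau,\omega}(u,v) = \tau\inf\{\sum_{k=1}^N(\omega d_k+G_k)(w_k,v) : u-v = \tau\sum_{k=1}^N R_k^*w_k,\ w_k\in V_k\} + (1-\tau N)G(v)$.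
   Context: $\Gamma_0(V)$ is the set of proper, convex, lower semicontinuous functionals $V\to\mathbb{R}\cup\{+\infty\}$; $\operatorname{dom} G=\{u: G(u)<\infty\}$; $\overline{\mathbb{R}} = \mathbb{R}\cup\{\pm\infty\}$. *)

theory Defs
  imports "HOL-Analysis.Analysis"
begin

definition reflexive_space :: "'a::real_normed_vector itself \<Rightarrow> bool" where
  "reflexive_space TYPE('a) \<longleftrightarrow>
     (\<forall>\<phi> :: ('a \<Rightarrow>\<^sub>L real) \<Rightarrow>\<^sub>L real. \<exists>x::'a. \<forall>f. blinfun_apply \<phi> f = blinfun_apply f x)"

definition bounded_linear_on :: "'a::real_normed_vector set \<Rightarrow> ('a \<Rightarrow> 'b::real_normed_vector) \<Rightarrow> bool" where
  "bounded_linear_on S f \<longleftrightarrow>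
     (\<forall>x\<in>S. \<forall>y\<in>S. f (x + y) = f x + f y) \<and>
     (\<forall>x\<in>S. \<forall>c. f (c *\<^sub>R x) = c *\<^sub>R f x) \<and>
     (\<exists>C. \<forall>x\<in>S. norm (f x) \<le> C * norm x)"

definition proper_on :: "'a set \<Rightarrow> ('a \<Rightarrow> ereal) \<Rightarrow> bool" where
  "proper_on S f \<longleftrightarrow> (\<forall>x\<in>S. f x \<noteq> -\<infinity>) \<and> (\<exists>x\<in>S. f x < \<infinity>)"

definition ereal_convex_on :: "'a::real_vector set \<Rightarrow> ('a \<Rightarrow> ereal) \<Rightarrow> bool" where
  "ereal_convex_on S f \<longleftrightarrow> convex S \<and>
     (\<forall>x\<in>S. \<forall>y\<in>S. \<forall>t::real. 0 \<le> t \<and> t \<le> 1 \<longrightarrow>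
        f ((1 - t) *\<^sub>R x + t *\<^sub>R y) \<le> ereal (1 - t) * f x + ereal t * f y)"

definition lsc_on :: "'a::topological_space set \<Rightarrow> ('a \<Rightarrow> ereal) \<Rightarrow> bool" where
  "lsc_on S f \<longleftrightarrow> (\<forall>c::real. closedin (top_of_set S) {x\<in>S. f x \<le> ereal c})"

definition Gamma0_on :: "'a::real_normed_vector set \<Rightarrow> ('a \<Rightarrow> ereal) \<Rightarrow> bool" where
  "Gamma0_on S f \<longleftrightarrow> proper_on S f \<and> ereal_convex_on S f \<and> lsc_on S f"

definition M_fun ::
  "nat \<Rightarrow> (nat \<Rightarrow> 'w::real_normed_vector set) \<Rightarrow> (nat \<Rightarrow> 'w \<Rightarrow> 'v::real_normed_vector)
   \<Rightarrow> (nat \<Rightarrow> 'w \<Rightarrow> 'v \<Rightarrow> ereal) \<Rightarrow> (nat \<Rightarrow> 'w \<Rightarrow> 'v \<Rightarrow> ereal) \<Rightarrow> ('v \<Rightarrow> ereal)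
   \<Rightarrow> real \<Rightarrow> real \<Rightarrow> 'v \<Rightarrow> 'v \<Rightarrow> ereal" where
  "M_fun N S Rs d Gk G \<tau> \<omega> u v =
     ereal \<tau> * (INF w \<in> {w. (\<forall>k\<in>{1..N}. w k \<in> S k) \<and> u - v = \<tau> *\<^sub>R (\<Sum>k=1..N. Rs k (w k))}.
                  (\<Sum>k=1..N. ereal \<omega> * d k (w k) v + Gk k (w k) v))
     + ereal (1 - \<tau> * real N) * G v"

end

theory Submission
  imports Defs
begin


lemma ereal_INF_cmult_h:
  assumes "c > (0::real)"
  shows "ereal c * (INF a\<in>A. g a) = (INF a\<in>A. ereal c * g a)"
proof -
  have "Inf {ereal c * x |x. x \<in> g ` A} = ereal c * Inf {x. x \<in> g ` A}"
    by (rule ereal_Inf_cmult[OF assms])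
  moreover have "{ereal c * x |x. x \<in> g ` A} = (\<lambda>a. ereal c * g a) ` A" by auto
  ultimately show ?thesis by (simp add: image_image)
qed

lemma ereal_sum_distrib_h:
  fixes a :: "nat \<Rightarrow> real" and b :: "nat \<Rightarrow> ereal"
  shows "ereal (t * (\<Sum>k\<in>K. a k)) + ereal t * (\<Sum>k\<in>K. b k)
       = ereal t * (\<Sum>k\<in>K. ereal (a k) + b k)"
proof -
  have "(\<Sum>k\<in>K. ereal (a k) + b k) = ereal (\<Sum>k\<in>K. a k) + (\<Sum>k\<in>K. b k)"
    by (simp add: sum.distrib)
  also have "ereal t * \<dots> = ereal t * ereal (\<Sum>k\<in>K. a k) + ereal t * (\<Sum>k\<in>K. b k)"
    by (rule ereal_distrib_left) auto
  finally show ?thesis by simp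
qed

lemma ereal_cancel_h:
  fixes p q :: ereal
  assumes "ereal c + ereal a + p + q \<le> ereal c + ereal a' + p' + q'"
  shows "ereal a + p + q \<le> ereal a' + p' + q'"
proof -
  have "ereal c + (ereal a + p + q) \<le> ereal c + (ereal a' + p' + q')"
    using assms by (simp only: add.assoc)
  then show ?thesis by (simp add: ereal_add_le_add_iff)
qed

theorem lemma4p5:
  fixes F :: "'v::banach \<Rightarrow> real"
    and F' :: "'v \<Rightarrow> ('v \<Rightarrow>\<^sub>L real)"
    and G :: "'v \<Rightarrow> ereal"
    and N :: nat
    and S :: "nat \<Rightarrow> 'w::banach set"
    and Rs :: "nat \<Rightarrow> 'w \<Rightarrow> 'v"
    and d Gk :: "nat \<Rightarrow> 'w \<Rightarrow> 'v \<Rightarrow> ereal"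
    and \<tau>0 \<omega>0 \<tau> \<omega> :: real
    and u :: "nat \<Rightarrow> 'v"
    and w :: "nat \<Rightarrow> nat \<Rightarrow> 'w"
  assumes reflV: "reflexive_space TYPE('v)"
    and Fdiff: "\<And>x. (F has_derivative blinfun_apply (F' x)) (at x)"
    and Fconv: "convex_on UNIV F"
    and G0: "Gamma0_on UNIV G"
    and N1: "N \<ge> 1"
    and reflW: "reflexive_space TYPE('w)"
    and Ssub: "\<And>k. k \<in> {1..N} \<Longrightarrow> subspace (S k) \<and> closed (S k)"
    and Rbl: "\<And>k. k \<in> {1..N} \<Longrightarrow> bounded_linear_on (S k) (Rs k)"
    and Rsum: "\<And>v. \<exists>z. (\<forall>k\<in>{1..N}. z k \<in> S k) \<and> v = (\<Sum>k=1..N. Rs k (z k))"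
    and Radj_surj: "\<And>k \<psi>. k \<in> {1..N} \<Longrightarrow> bounded_linear_on (S k) \<psi> \<Longrightarrow>
                     \<exists>\<phi> :: 'v \<Rightarrow>\<^sub>L real. \<forall>x\<in>S k. blinfun_apply \<phi> (Rs k x) = (\<psi> x :: real)"
    and dG0: "\<And>k v. k \<in> {1..N} \<Longrightarrow> Gamma0_on (S k) (\<lambda>x. d k x v)"
    and GkG0: "\<And>k v. k \<in> {1..N} \<Longrightarrow> Gamma0_on (S k) (\<lambda>x. Gk k x v)"
    and tau0: "0 < \<tau>0" "\<tau>0 \<le> 1" and omega0: "0 < \<omega>0"
    and tau: "0 < \<tau>" "\<tau> \<le> \<tau>0" and omega: "\<omega> \<ge> \<omega>0"
    and u0: "G (u 0) < \<infinity>"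
    and wmem: "\<And>n k. k \<in> {1..N} \<Longrightarrow> w (Suc n) k \<in> S k"
    and wmin: "\<And>n k z. k \<in> {1..N} \<Longrightarrow> z \<in> S k \<Longrightarrow>
        ereal (F (u n)) + ereal (blinfun_apply (F' (u n)) (Rs k (w (Suc n) k)))
          + ereal \<omega> * d k (w (Suc n) k) (u n) + Gk k (w (Suc n) k) (u n)
        \<le> ereal (F (u n)) + ereal (blinfun_apply (F' (u n)) (Rs k z))
          + ereal \<omega> * d k z (u n) + Gk k z (u n)"
    and uSuc: "\<And>n. u (Suc n) = u n + \<tau> *\<^sub>R (\<Sum>k=1..N. Rs k (w (Suc n) k))"
  shows "\<forall>n. \<forall>x.
     ereal (F (u n) + blinfun_apply (F' (u n)) (u (Suc n) - u n)) + M_fun N S Rs d Gk G \<tau> \<omega> (u (Suc n)) (u n)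
     \<le> ereal (F (u n) + blinfun_apply (F' (u n)) (x - u n)) + M_fun N S Rs d Gk G \<tau> \<omega> x (u n)"
proof (intro allI)
  fix n x
  define v where "v = u n"
  define L where "L = blinfun_apply (F' v)"
  define A where "A = (\<lambda>y. {w. (\<forall>k\<in>{1..N}. w k \<in> S k) \<and> y - v = \<tau> *\<^sub>R (\<Sum>k=1..N. Rs k (w k))})"
  define f where "f = (\<lambda>w. \<Sum>k=1..N. ereal \<omega> * d k (w k) v + Gk k (w k) v)"
  define h where "h = (\<lambda>w. \<Sum>k=1..N. ereal (L (Rs k (w k))) + ereal \<omega> * d k (w k) v + Gk k (w k) v)"
  define I where "I = (\<lambda>y. INF w' \<in> A y. f w')"
  have Lsum: "ereal (L (y - v)) + ereal \<tau> * f w' = ereal \<tau> * h w'" if "w' \<in> A y" for y w'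
  proof -
    have "L (y - v) = \<tau> * (\<Sum>k=1..N. L (Rs k (w' k)))"
      using that unfolding A_def L_def by (simp add: blinfun.scaleR_right blinfun.sum_right)
    then show ?thesis unfolding f_def h_def
      using ereal_sum_distrib_h[of \<tau> "\<lambda>k. L (Rs k (w' k))" "{1..N}"
          "\<lambda>k. ereal \<omega> * d k (w' k) v + Gk k (w' k) v"]
      by (simp add: add.assoc)
  qed
  have wA: "w (Suc n) \<in> A (u (Suc n))"
    unfolding A_def v_def using wmem uSuc by auto
  have hmin: "h (w (Suc n)) \<le> h w'" if "w' \<in> A y" for y w'
    unfolding h_def
  proof (rule sum_mono)
    fix k assume k: "k \<in> {1..N}"
    have "w' k \<in> S k" using that k unfolding A_def by auto
    from ereal_cancel_h[OF wmin[OF k this, of n]]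
    show "ereal (L (Rs k (w (Suc n) k))) + ereal \<omega> * d k (w (Suc n) k) v + Gk k (w (Suc n) k) v
        \<le> ereal (L (Rs k (w' k))) + ereal \<omega> * d k (w' k) v + Gk k (w' k) v"
      unfolding L_def v_def .
  qed
  define P where "P = ereal (L (u (Suc n) - v)) + ereal \<tau> * I (u (Suc n))"
  have C1: "P \<le> ereal (L (x - v)) + ereal \<tau> * f w'" if "w' \<in> A x" for w'
  proof -
    have "I (u (Suc n)) \<le> f (w (Suc n))" unfolding I_def using wA by (rule INF_lower)
    then have "P \<le> ereal (L (u (Suc n) - v)) + ereal \<tau> * f (w (Suc n))"
      unfolding P_def using tau by (intro add_left_mono ereal_mult_left_mono) auto
    also have "\<dots> = ereal \<tau> * h (w (Suc n))" using Lsum[OF wA] .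
    also have "\<dots> \<le> ereal \<tau> * h w'" using hmin[OF that] tau by (intro ereal_mult_left_mono) auto
    also have "\<dots> = ereal (L (x - v)) + ereal \<tau> * f w'" using Lsum[OF that] by simp
    finally show ?thesis .
  qed
  have C2: "P \<le> ereal (L (x - v)) + ereal \<tau> * I x"
  proof -
    have "P - ereal (L (x - v)) \<le> ereal \<tau> * I x"
      unfolding I_def ereal_INF_cmult_h[OF tau(1)]
    proof (rule INF_greatest)
      fix w' assume "w' \<in> A x"
      from C1[OF this] show "P - ereal (L (x - v)) \<le> ereal \<tau> * f w'"
        by (simp add: ereal_minus_le add.commute)
    qed
    then show ?thesis by (simp add: ereal_minus_le add.commute)
  qed
  have M: "M_fun N S Rs d Gk G \<tau> \<omega> y v = ereal \<tau> * I y + ereal (1 - \<tau> * real N) * G v" for y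
    unfolding M_fun_def I_def A_def f_def by simp
  have "ereal (F v) + (P + ereal (1 - \<tau> * real N) * G v)
     \<le> ereal (F v) + (ereal (L (x - v)) + ereal \<tau> * I x + ereal (1 - \<tau> * real N) * G v)"
    using C2 by (intro add_left_mono add_right_mono)
  then show "ereal (F (u n) + blinfun_apply (F' (u n)) (u (Suc n) - u n)) + M_fun N S Rs d Gk G \<tau> \<omega> (u (Suc n)) (u n)
     \<le> ereal (F (u n) + blinfun_apply (F' (u n)) (x - u n)) + M_fun N S Rs d Gk G \<tau> \<omega> x (u n)"
    unfolding M[unfolded v_def] P_def L_def v_def by (simp only: plus_ereal.simps(1)[symmetric] add.assoc)
qed

end
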